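(* For a generic relaxed scenario $\mathscr{S}=(T,S,\sigma,\mu,\tau_T,\tau_S)$ it holds that $G_{=}(\mathscr{S})=\mathrm{sQO}(\mathscr{S})$ and thus $G_{=}(\mathscr{S})\subseteq\mathrm{wQO}(\mathscr{S})$. In particular, if $\mathscr{S}$ has no HGT-edges, or if $S$ and $T$ are binary, then $\mathrm{sQO}(\mathscr{S})$ is a cograph.
   Context: All trees are planted phylogenetic trees: a tree $T$ has a distinguished vertex $0_T$ of degree $1$ whose unique neighbor $\rho_T$ is the root, and every vertex other than $0_T$ and the leaves $L(T)$ has at least two children; it is binary if each such vertex has exactly two children. For $x,y\in V(T)$ write $y\preceq_T x$ if $x$ lies on the path from $0_T$ to $y$; edges are written $uv$ with $v\prec_T u$. The order extends to $V(T)\cup E(T)$: for a vertex $x$ and an edge $e=uv$, $x\preceq_T e$ iff $x\preceq_T v$, and $e\preceq_T x$ iff $u\preceq_T x$; for edges, $uv\preceq_T ab$ iff $v\preceq_T b$. Two elements are comparable if one is $\preceq$ the other. $V^0(T)=V(T)\setminus(L(T)\cup\{0_T\})$; $\mathrm{lca}_T$ denotes the last common ancestor. A time map for $T$ is $\tau_T\colon V(T)\to\mathbb{R}$ with $\tau_T(x)<\tau_T(y)$ whenever $x\prec_T y$. A relaxed scenario $\mathscr{S}=(T,S,\sigma,\mu,\tau_T,\tau_S)$ consists of a gene tree $T$ with time map $\tau_T$, a species tree $S$ with time map $\tau_S$, a map $\sigma\colon L(T)\to M$ with $M\subseteq L(S)$, and a map $\mu\colon V(T)\to V(S)\cup E(S)$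 such that (S0) $\mu(x)=0_S$ iff $x=0_T$; (S1) $\mu(x)\in L(S)$ iff $x\in L(T)$, in which case $\mu(x)=\sigma(x)$; (S2) if $\mu(x)\in V(S)$ then $\tau_S(\mu(x))=\tau_T(x)$; (S3) if $\mu(x)=uv\in E(S)$ then $\tau_S(v)<\tau_T(x)<\tau_S(u)$. The EDT graph $G_{=}(\mathscr{S})$ has vertex set $L(T)$ and an edge $xy$ ($x\ne y$) iff $\tau_T(\mathrm{lca}_T(x,y))=\tau_S(\mathrm{lca}_S(\sigma(x),\sigma(y)))$. An edge $uv\in E(T)$ is an HGT-edge if $\mu(u)$ and $\mu(v)$ are incomparable in $S$. The scenario is generic if for all $v\in V^0(T)$ and $U\in V^0(S)$, $\tau_T(v)=\tau_S(U)$ implies $\mu(v)=U$. $\mathrm{wQO}(\mathscr{S})$ (weak quasi-orthology graph) has vertex set $L(T)$ and edges $xy$, $x\neq y$, with $\mu(\mathrm{lca}_T(x,y))\in V^0(S)$; $\mathrm{sQO}(\mathscr{S})$ (strict quasi-orthology graph) has vertex set $L(T)$ and edges $xy$, $x\ne y$, with $\mu(\mathrm{lca}_T(x,y))=\mathrm{lca}_S(\sigma(x),\sigma(y))$. A cograph is a graph with no induced path on four vertices. *)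

theory Defs
  imports Complex_Main
begin

text \<open>A tree is given by a finite vertex set V, a set E of directed edges (u,v),
  where v is a child of u, and the planted vertex z (= 0_T).\<close>

definition children :: "('a \<times> 'a) set \<Rightarrow> 'a \<Rightarrow> 'a set" where
  "children E v = {w. (v, w) \<in> E}"

definition planted_tree :: "'a set \<Rightarrow> ('a \<times> 'a) set \<Rightarrow> 'a \<Rightarrow> bool" where
  "planted_tree V E z \<longleftrightarrow>
     finite V \<and> E \<subseteq> V \<times> V \<and> z \<in> V \<and>
     (\<forall>v\<in>V. (z, v) \<in> E\<^sup>*) \<and>
     (\<forall>v. (v, z) \<notin> E) \<and>
     (\<forall>v\<in>V - {z}. \<exists>!u. (u, v) \<in> E) \<and>
     card (children E z) = 1"

definition leaves :: "'a set \<Rightarrow> ('a \<times> 'a) set \<Rightarrow> 'a \<Rightarrow> 'a set" where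
  "leaves V E z = {v \<in> V. v \<noteq> z \<and> children E v = {}}"

definition inner :: "'a set \<Rightarrow> ('a \<times> 'a) set \<Rightarrow> 'a \<Rightarrow> 'a set" where
  "inner V E z = V - leaves V E z - {z}"

definition phylo_tree :: "'a set \<Rightarrow> ('a \<times> 'a) set \<Rightarrow> 'a \<Rightarrow> bool" where
  "phylo_tree V E z \<longleftrightarrow> planted_tree V E z \<and>
     (\<forall>v\<in>inner V E z. card (children E v) \<ge> 2)"

definition binary_tree :: "'a set \<Rightarrow> ('a \<times> 'a) set \<Rightarrow> 'a \<Rightarrow> bool" where
  "binary_tree V E z \<longleftrightarrow> phylo_tree V E z \<and>
     (\<forall>v\<in>inner V E z. card (children E v) = 2)"

definition preceq :: "('a \<times> 'a) set \<Rightarrow> 'a \<Rightarrow> 'a \<Rightarrow> bool" where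
  "preceq E y x \<longleftrightarrow> (x, y) \<in> E\<^sup>*"

definition lca :: "('a \<times> 'a) set \<Rightarrow> 'a \<Rightarrow> 'a \<Rightarrow> 'a" where
  "lca E x y = (THE c. preceq E x c \<and> preceq E y c \<and>
                  (\<forall>w. preceq E x w \<and> preceq E y w \<longrightarrow> preceq E c w))"

definition time_map :: "'a set \<Rightarrow> ('a \<times> 'a) set \<Rightarrow> ('a \<Rightarrow> real) \<Rightarrow> bool" where
  "time_map V E \<tau> \<longleftrightarrow> (\<forall>x\<in>V. \<forall>y\<in>V. preceq E x y \<and> x \<noteq> y \<longrightarrow> \<tau> x < \<tau> y)"

datatype 's vedge = Vx 's | Ed 's 's

definition elems :: "'s set \<Rightarrow> ('s \<times> 's) set \<Rightarrow> 's vedge set" where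
  "elems V E = Vx ` V \<union> (\<lambda>(u, v). Ed u v) ` E"

text \<open>The extension of the order to vertices and edges (edge uv has v child of u).\<close>

fun preceq_ve :: "('s \<times> 's) set \<Rightarrow> 's vedge \<Rightarrow> 's vedge \<Rightarrow> bool" where
  "preceq_ve E (Vx x) (Vx y) = preceq E x y"
| "preceq_ve E (Vx x) (Ed u v) = preceq E x v"
| "preceq_ve E (Ed u v) (Vx x) = preceq E u x"
| "preceq_ve E (Ed u v) (Ed a b) = preceq E v b"

definition comparable_ve :: "('s \<times> 's) set \<Rightarrow> 's vedge \<Rightarrow> 's vedge \<Rightarrow> bool" where
  "comparable_ve E a b \<longleftrightarrow> preceq_ve E a b \<or> preceq_ve E b a"

definition relaxed_scenario ::
  "'v set \<Rightarrow> ('v \<times> 'v) set \<Rightarrow> 'v \<Rightarrow> 's set \<Rightarrow> ('s \<times> 's) set \<Rightarrow> 's \<Rightarrow>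
   ('v \<Rightarrow> 's) \<Rightarrow> ('v \<Rightarrow> 's vedge) \<Rightarrow> ('v \<Rightarrow> real) \<Rightarrow> ('s \<Rightarrow> real) \<Rightarrow> bool" where
  "relaxed_scenario VT ET zT VS ES zS \<sigma> \<mu> \<tau>T \<tau>S \<longleftrightarrow>
     phylo_tree VT ET zT \<and> phylo_tree VS ES zS \<and>
     time_map VT ET \<tau>T \<and> time_map VS ES \<tau>S \<and>
     \<sigma> ` leaves VT ET zT \<subseteq> leaves VS ES zS \<and>
     (\<forall>x\<in>VT. \<mu> x \<in> elems VS ES) \<and>
     (\<forall>x\<in>VT. \<mu> x = Vx zS \<longleftrightarrow> x = zT) \<and>
     (\<forall>x\<in>VT. (\<exists>l\<in>leaves VS ES zS. \<mu> x = Vx l) \<longleftrightarrow> x \<in> leaves VT ET zT) \<and>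
     (\<forall>x\<in>leaves VT ET zT. \<mu> x = Vx (\<sigma> x)) \<and>
     (\<forall>x\<in>VT. \<forall>u. \<mu> x = Vx u \<longrightarrow> \<tau>S u = \<tau>T x) \<and>
     (\<forall>x\<in>VT. \<forall>u v. \<mu> x = Ed u v \<longrightarrow> \<tau>S v < \<tau>T x \<and> \<tau>T x < \<tau>S u)"

definition generic ::
  "'v set \<Rightarrow> ('v \<times> 'v) set \<Rightarrow> 'v \<Rightarrow> 's set \<Rightarrow> ('s \<times> 's) set \<Rightarrow> 's \<Rightarrow>
   ('v \<Rightarrow> 's vedge) \<Rightarrow> ('v \<Rightarrow> real) \<Rightarrow> ('s \<Rightarrow> real) \<Rightarrow> bool" where
  "generic VT ET zT VS ES zS \<mu> \<tau>T \<tau>S \<longleftrightarrow>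
     (\<forall>v\<in>inner VT ET zT. \<forall>U\<in>inner VS ES zS. \<tau>T v = \<tau>S U \<longrightarrow> \<mu> v = Vx U)"

definition HGT_edge :: "('v \<times> 'v) set \<Rightarrow> ('s \<times> 's) set \<Rightarrow> ('v \<Rightarrow> 's vedge) \<Rightarrow> 'v \<Rightarrow> 'v \<Rightarrow> bool" where
  "HGT_edge ET ES \<mu> u v \<longleftrightarrow> (u, v) \<in> ET \<and> \<not> comparable_ve ES (\<mu> u) (\<mu> v)"

text \<open>A graph is a pair (vertex set, symmetric set of ordered pairs of distinct vertices).\<close>

type_synonym 'v graph = "'v set \<times> ('v \<times> 'v) set"

definition EDT_graph ::
  "'v set \<Rightarrow> ('v \<times> 'v) set \<Rightarrow> 'v \<Rightarrow> ('s \<times> 's) set \<Rightarrow>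
   ('v \<Rightarrow> 's) \<Rightarrow> ('v \<Rightarrow> real) \<Rightarrow> ('s \<Rightarrow> real) \<Rightarrow> 'v graph" where
  "EDT_graph VT ET zT ES \<sigma> \<tau>T \<tau>S =
     (leaves VT ET zT,
      {(x, y). x \<in> leaves VT ET zT \<and> y \<in> leaves VT ET zT \<and> x \<noteq> y \<and>
               \<tau>T (lca ET x y) = \<tau>S (lca ES (\<sigma> x) (\<sigma> y))})"

definition wQO ::
  "'v set \<Rightarrow> ('v \<times> 'v) set \<Rightarrow> 'v \<Rightarrow> 's set \<Rightarrow> ('s \<times> 's) set \<Rightarrow> 's \<Rightarrow>
   ('v \<Rightarrow> 's vedge) \<Rightarrow> 'v graph" where
  "wQO VT ET zT VS ES zS \<mu> =
     (leaves VT ET zT,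
      {(x, y). x \<in> leaves VT ET zT \<and> y \<in> leaves VT ET zT \<and> x \<noteq> y \<and>
               \<mu> (lca ET x y) \<in> Vx ` inner VS ES zS})"

definition sQO ::
  "'v set \<Rightarrow> ('v \<times> 'v) set \<Rightarrow> 'v \<Rightarrow> ('s \<times> 's) set \<Rightarrow>
   ('v \<Rightarrow> 's) \<Rightarrow> ('v \<Rightarrow> 's vedge) \<Rightarrow> 'v graph" where
  "sQO VT ET zT ES \<sigma> \<mu> =
     (leaves VT ET zT,
      {(x, y). x \<in> leaves VT ET zT \<and> y \<in> leaves VT ET zT \<and> x \<noteq> y \<and>
               \<mu> (lca ET x y) = Vx (lca ES (\<sigma> x) (\<sigma> y))})"

definition subgraph :: "'v graph \<Rightarrow> 'v graph \<Rightarrow> bool" where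
  "subgraph G H \<longleftrightarrow> fst G \<subseteq> fst H \<and> snd G \<subseteq> snd H"

definition cograph :: "'v graph \<Rightarrow> bool" where
  "cograph G \<longleftrightarrow> \<not> (\<exists>a\<in>fst G. \<exists>b\<in>fst G. \<exists>c\<in>fst G. \<exists>d\<in>fst G.
       distinct [a, b, c, d] \<and>
       (a, b) \<in> snd G \<and> (b, c) \<in> snd G \<and> (c, d) \<in> snd G \<and>
       (a, c) \<notin> snd G \<and> (b, d) \<notin> snd G \<and> (a, d) \<notin> snd G)"

end

theory Submission
  imports Defs
begin

lemma comb_bin:
  fixes G :: "('v \<times> 'v) set" and \<beta> :: "'v \<Rightarrow> 'b" and \<kappa> :: "'v \<Rightarrow> 'c option"
  assumes blk: "\<And>x. x \<in> {a,b,c,d} \<Longrightarrow> \<beta> x = p \<or> \<beta> x = q"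
    and notall: "\<not> (\<beta> a = \<beta> b \<and> \<beta> a = \<beta> c \<and> \<beta> a = \<beta> d)"
    and cls: "\<And>x. x \<in> {a,b,c,d} \<Longrightarrow> \<kappa> x = None \<or> \<kappa> x = Some l \<or> \<kappa> x = Some r"
    and cross: "\<And>x y. x \<in> {a,b,c,d} \<Longrightarrow> y \<in> {a,b,c,d} \<Longrightarrow> \<beta> x \<noteq> \<beta> y \<Longrightarrow>
        ((x, y) \<in> G \<longleftrightarrow> \<kappa> x \<noteq> None \<and> \<kappa> y \<noteq> None \<and> \<kappa> x \<noteq> \<kappa> y)"
    and within: "\<And>x y. x \<in> {a,b,c,d} \<Longrightarrow> y \<in> {a,b,c,d} \<Longrightarrow> \<beta> x = \<beta> y \<Longrightarrow> (x, y) \<in> G \<Longrightarrow> \<kappa> x = \<kappa> y"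
    and e: "(a,b) \<in> G" "(b,c) \<in> G" "(c,d) \<in> G" "(a,c) \<notin> G" "(b,d) \<notin> G" "(a,d) \<notin> G"
  shows False
proof -
  have c1: "\<beta> a \<noteq> \<beta> b \<Longrightarrow> ((a, b) \<in> G \<longleftrightarrow> \<kappa> a \<noteq> None \<and> \<kappa> b \<noteq> None \<and> \<kappa> a \<noteq> \<kappa> b)"
   and c2: "\<beta> b \<noteq> \<beta> c \<Longrightarrow> ((b, c) \<in> G \<longleftrightarrow> \<kappa> b \<noteq> None \<and> \<kappa> c \<noteq> None \<and> \<kappa> b \<noteq> \<kappa> c)"
   and c3: "\<beta> c \<noteq> \<beta> d \<Longrightarrow> ((c, d) \<in> G \<longleftrightarrow> \<kappa> c \<noteq> None \<and> \<kappa> d \<noteq> None \<and> \<kappa> c \<noteq> \<kappa> d)"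
   and c4: "\<beta> a \<noteq> \<beta> c \<Longrightarrow> ((a, c) \<in> G \<longleftrightarrow> \<kappa> a \<noteq> None \<and> \<kappa> c \<noteq> None \<and> \<kappa> a \<noteq> \<kappa> c)"
   and c5: "\<beta> b \<noteq> \<beta> d \<Longrightarrow> ((b, d) \<in> G \<longleftrightarrow> \<kappa> b \<noteq> None \<and> \<kappa> d \<noteq> None \<and> \<kappa> b \<noteq> \<kappa> d)"
   and c6: "\<beta> a \<noteq> \<beta> d \<Longrightarrow> ((a, d) \<in> G \<longleftrightarrow> \<kappa> a \<noteq> None \<and> \<kappa> d \<noteq> None \<and> \<kappa> a \<noteq> \<kappa> d)"
    using cross by auto
  have w1: "\<beta> a = \<beta> b \<Longrightarrow> \<kappa> a = \<kappa> b" and w2: "\<beta> b = \<beta> c \<Longrightarrow> \<kappa> b = \<kappa> c"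
   and w3: "\<beta> c = \<beta> d \<Longrightarrow> \<kappa> c = \<kappa> d"
    using within e by auto
  have bs: "\<beta> a = p \<or> \<beta> a = q" "\<beta> b = p \<or> \<beta> b = q" "\<beta> c = p \<or> \<beta> c = q" "\<beta> d = p \<or> \<beta> d = q"
    using blk by auto
  have ks: "\<kappa> a = None \<or> \<kappa> a = Some l \<or> \<kappa> a = Some r" "\<kappa> b = None \<or> \<kappa> b = Some l \<or> \<kappa> b = Some r"
     "\<kappa> c = None \<or> \<kappa> c = Some l \<or> \<kappa> c = Some r" "\<kappa> d = None \<or> \<kappa> d = Some l \<or> \<kappa> d = Some r"
    using cls by auto
  show False using bs ks c1 c2 c3 c4 c5 c6 w1 w2 w3 notall e by smt
qed

lemma comb_nohgt:
  fixes G :: "('v \<times> 'v) set" and \<beta> :: "'v \<Rightarrow> 'b" and \<kappa> :: "'v \<Rightarrow> 'c"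
  assumes notall: "\<not> (\<beta> a = \<beta> b \<and> \<beta> a = \<beta> c \<and> \<beta> a = \<beta> d)"
    and cross: "\<And>x y. x \<in> {a,b,c,d} \<Longrightarrow> y \<in> {a,b,c,d} \<Longrightarrow> \<beta> x \<noteq> \<beta> y \<Longrightarrow>
        ((x, y) \<in> G \<longleftrightarrow> \<kappa> x \<noteq> \<kappa> y)"
    and within: "\<And>x y. x \<in> {a,b,c,d} \<Longrightarrow> y \<in> {a,b,c,d} \<Longrightarrow> \<beta> x = \<beta> y \<Longrightarrow> \<kappa> x = \<kappa> y"
    and e: "(a,b) \<in> G" "(b,c) \<in> G" "(c,d) \<in> G" "(a,c) \<notin> G" "(b,d) \<notin> G" "(a,d) \<notin> G"
  shows False
proof -
  have c1: "\<beta> a \<noteq> \<beta> b \<Longrightarrow> ((a, b) \<in> G \<longleftrightarrow> \<kappa> a \<noteq> \<kappa> b)"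
   and c2: "\<beta> b \<noteq> \<beta> c \<Longrightarrow> ((b, c) \<in> G \<longleftrightarrow> \<kappa> b \<noteq> \<kappa> c)"
   and c3: "\<beta> c \<noteq> \<beta> d \<Longrightarrow> ((c, d) \<in> G \<longleftrightarrow> \<kappa> c \<noteq> \<kappa> d)"
   and c4: "\<beta> a \<noteq> \<beta> c \<Longrightarrow> ((a, c) \<in> G \<longleftrightarrow> \<kappa> a \<noteq> \<kappa> c)"
   and c5: "\<beta> b \<noteq> \<beta> d \<Longrightarrow> ((b, d) \<in> G \<longleftrightarrow> \<kappa> b \<noteq> \<kappa> d)"
   and c6: "\<beta> a \<noteq> \<beta> d \<Longrightarrow> ((a, d) \<in> G \<longleftrightarrow> \<kappa> a \<noteq> \<kappa> d)"
    using cross by auto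
  have w: "\<beta> a = \<beta> b \<Longrightarrow> \<kappa> a = \<kappa> b" "\<beta> b = \<beta> c \<Longrightarrow> \<kappa> b = \<kappa> c"
   "\<beta> c = \<beta> d \<Longrightarrow> \<kappa> c = \<kappa> d" "\<beta> a = \<beta> c \<Longrightarrow> \<kappa> a = \<kappa> c"
   "\<beta> b = \<beta> d \<Longrightarrow> \<kappa> b = \<kappa> d" "\<beta> a = \<beta> d \<Longrightarrow> \<kappa> a = \<kappa> d"
    using within by auto
  show False using c1 c2 c3 c4 c5 c6 w notall e by smt
qed

definition kap :: "('a \<times> 'a) set \<Rightarrow> 'a \<Rightarrow> 'a \<Rightarrow> 'a option" where
  "kap E U p = (if \<exists>c. (U, c) \<in> E \<and> (c, p) \<in> E\<^sup>* then Some (THE c. (U, c) \<in> E \<and> (c, p) \<in> E\<^sup>*) else None)"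

locale tt =
  fixes V :: "'a set" and E :: "('a \<times> 'a) set" and z :: 'a and \<tau> :: "'a \<Rightarrow> real"
  assumes pt: "planted_tree V E z" and tm: "time_map V E \<tau>"
begin

lemma finV: "finite V" and EV: "E \<subseteq> V \<times> V" and zV: "z \<in> V"
  and reach: "v \<in> V \<Longrightarrow> (z, v) \<in> E\<^sup>*" and noin: "(v, z) \<notin> E"
  and par: "v \<in> V \<Longrightarrow> v \<noteq> z \<Longrightarrow> \<exists>!u. (u, v) \<in> E"
  and card1: "card (children E z) = 1"
  using pt unfolding planted_tree_def by auto

lemma edgeV: "(x, y) \<in> E \<Longrightarrow> x \<in> V \<and> y \<in> V" using EV by auto

lemma rt_V: "(x, y) \<in> E\<^sup>* \<Longrightarrow> x \<noteq> y \<Longrightarrow> x \<in> V \<and> y \<in> V"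
proof -
  assume a: "(x, y) \<in> E\<^sup>*" "x \<noteq> y"
  then have "(x, y) \<in> E\<^sup>+" by (meson rtranclD)
  then show ?thesis
    by (metis edgeV tranclE converse_tranclE)
qed

lemma rt_V1: "(x, y) \<in> E\<^sup>* \<Longrightarrow> y \<in> V \<Longrightarrow> x \<in> V"
  using rt_V by blast
lemma rt_V2: "(x, y) \<in> E\<^sup>* \<Longrightarrow> x \<in> V \<Longrightarrow> y \<in> V"
  using rt_V by blast

lemma tlt: "(x, y) \<in> E\<^sup>* \<Longrightarrow> x \<noteq> y \<Longrightarrow> \<tau> y < \<tau> x"
  using tm rt_V unfolding time_map_def preceq_def by blast

lemma tle: "(x, y) \<in> E\<^sup>* \<Longrightarrow> \<tau> y \<le> \<tau> x"
  using tlt by force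

lemma anti: "(x, y) \<in> E\<^sup>* \<Longrightarrow> (y, x) \<in> E\<^sup>* \<Longrightarrow> x = y"
  using tlt by (metis less_asym)

lemma noloop_aux: "(z, v) \<in> E\<^sup>* \<Longrightarrow> (v, v) \<notin> E"
proof (induction rule: rtrancl_induct)
  case base
  then show ?case using noin by blast
next
  case (step u v)
  show ?case
  proof
    assume "(v, v) \<in> E"
    have "v \<in> V" "v \<noteq> z" using step edgeV noin by auto
    then have "u = v" using par \<open>(v, v) \<in> E\<close> step(2) by blast
    then show False using step \<open>(v, v) \<in> E\<close> by simp
  qed
qed

lemma noloop: "(v, v) \<notin> E"
  using noloop_aux reach edgeV by blast

lemma pu: "(u, v) \<in> E \<Longrightarrow> (u', v) \<in> E \<Longrightarrow> u = u'"
  using par edgeV noin by metis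

lemma chain: "(a, y) \<in> E\<^sup>* \<Longrightarrow> (b, y) \<in> E\<^sup>* \<Longrightarrow> (a, b) \<in> E\<^sup>* \<or> (b, a) \<in> E\<^sup>*"
proof (induction arbitrary: b rule: rtrancl_induct)
  case base
  then show ?case by simp
next
  case (step u y)
  from step(4) show ?case
  proof (cases rule: rtranclE)
    case base
    then show ?thesis using step by (meson rtrancl.rtrancl_into_rtrancl)
  next
    case (step y')
    then have "y' = u" using pu \<open>(u, y) \<in> E\<close> by blast
    then show ?thesis using step \<open>\<And>b. (b, u) \<in> E\<^sup>* \<Longrightarrow> (a, b) \<in> E\<^sup>* \<or> (b, a) \<in> E\<^sup>*\<close> by blast
  qed
qed

lemma strict_parent: "(w', w) \<in> E\<^sup>* \<Longrightarrow> w' \<noteq> w \<Longrightarrow> (u, w) \<in> E \<Longrightarrow> (w', u) \<in> E\<^sup>*"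
  by (metis pu rtranclE)

lemma child_on_path: "(v, x) \<in> E\<^sup>* \<Longrightarrow> v \<noteq> x \<Longrightarrow> \<exists>c. (v, c) \<in> E \<and> (c, x) \<in> E\<^sup>*"
  by (metis converse_rtranclE)

lemma child_unique: "(v, c) \<in> E \<Longrightarrow> (v, c') \<in> E \<Longrightarrow> (c, x) \<in> E\<^sup>* \<Longrightarrow> (c', x) \<in> E\<^sup>* \<Longrightarrow> c = c'"
proof -
  assume a: "(v, c) \<in> E" "(v, c') \<in> E" "(c, x) \<in> E\<^sup>*" "(c', x) \<in> E\<^sup>*"
  show "c = c'"
  proof (rule ccontr)
    assume ne: "c \<noteq> c'"
    from chain[OF a(3) a(4)] show False
    proof
      assume "(c, c') \<in> E\<^sup>*"
      then have "(c, v) \<in> E\<^sup>*" using strict_parent ne a(2) by blast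
      moreover have "(v, c) \<in> E\<^sup>*" "v \<noteq> c" using a(1) noloop by auto
      ultimately show False using anti by blast
    next
      assume "(c', c) \<in> E\<^sup>*"
      then have "(c', v) \<in> E\<^sup>*" using strict_parent ne a(1) by metis
      moreover have "(v, c') \<in> E\<^sup>*" "v \<noteq> c'" using a(2) noloop by auto
      ultimately show False using anti by blast
    qed
  qed
qed

lemma common_min:
  assumes "A \<subseteq> V" "A \<noteq> {}"
  shows "\<exists>c. (\<forall>x\<in>A. (c, x) \<in> E\<^sup>*) \<and> (\<forall>w. (\<forall>x\<in>A. (w, x) \<in> E\<^sup>*) \<longrightarrow> (w, c) \<in> E\<^sup>*)"
proof -
  define C where "C = {w. \<forall>x\<in>A. (w, x) \<in> E\<^sup>*}"
  obtain x0 where x0: "x0 \<in> A" using assms by blast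
  have CV: "C \<subseteq> V"
  proof
    fix w assume "w \<in> C"
    then have "(w, x0) \<in> E\<^sup>*" using x0 C_def by blast
    then show "w \<in> V" using rt_V1 x0 assms by blast
  qed
  have fC: "finite C" using CV finV finite_subset by blast
  have zC: "z \<in> C" using reach assms C_def by blast
  have ne: "\<tau> ` C \<noteq> {}" using zC by blast
  have "Min (\<tau> ` C) \<in> \<tau> ` C" using Min_in fC ne by blast
  then obtain c where cC: "c \<in> C" and cm: "\<tau> c = Min (\<tau> ` C)" by auto
  have cmin: "\<forall>w\<in>C. \<tau> c \<le> \<tau> w" using cm fC by simp
  show ?thesis
  proof (intro exI conjI allI impI)
    show "\<forall>x\<in>A. (c, x) \<in> E\<^sup>*" using cC C_def by blast
  next
    fix w assume w: "\<forall>x\<in>A. (w, x) \<in> E\<^sup>*"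
    then have wC: "w \<in> C" using C_def by blast
    have "(w, c) \<in> E\<^sup>* \<or> (c, w) \<in> E\<^sup>*" using chain w cC C_def x0 by blast
    then show "(w, c) \<in> E\<^sup>*"
    proof
      assume "(c, w) \<in> E\<^sup>*"
      then show ?thesis using tlt cmin wC by force
    qed
  qed
qed

lemma lca_prop:
  assumes "x \<in> V" "y \<in> V"
  shows "(lca E x y, x) \<in> E\<^sup>* \<and> (lca E x y, y) \<in> E\<^sup>* \<and>
         (\<forall>w. (w, x) \<in> E\<^sup>* \<and> (w, y) \<in> E\<^sup>* \<longrightarrow> (w, lca E x y) \<in> E\<^sup>*)"
proof -
  obtain c where c: "(\<forall>x'\<in>{x,y}. (c, x') \<in> E\<^sup>*) \<and> (\<forall>w. (\<forall>x'\<in>{x,y}. (w, x') \<in> E\<^sup>*) \<longrightarrow> (w, c) \<in> E\<^sup>*)"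
    using common_min[of "{x,y}"] assms by blast
  have "lca E x y = c"
    unfolding lca_def preceq_def
  proof (rule the_equality)
    show "(c, x) \<in> E\<^sup>* \<and> (c, y) \<in> E\<^sup>* \<and> (\<forall>w. (w, x) \<in> E\<^sup>* \<and> (w, y) \<in> E\<^sup>* \<longrightarrow> (w, c) \<in> E\<^sup>*)"
      using c by blast
  next
    fix c' assume "(c', x) \<in> E\<^sup>* \<and> (c', y) \<in> E\<^sup>* \<and> (\<forall>w. (w, x) \<in> E\<^sup>* \<and> (w, y) \<in> E\<^sup>* \<longrightarrow> (w, c') \<in> E\<^sup>*)"
    then show "c' = c" using c anti by blast
  qed
  then show ?thesis using c by blast
qed

lemma lca_self: "x \<in> V \<Longrightarrow> lca E x x = x"
  using lca_prop[of x x] anti by blast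

lemma lca_V: "x \<in> V \<Longrightarrow> y \<in> V \<Longrightarrow> lca E x y \<in> V"
  using lca_prop rt_V1 by blast

lemma root_child: "\<exists>\<rho>. (z, \<rho>) \<in> E \<and> (\<forall>v\<in>V. v \<noteq> z \<longrightarrow> (\<rho>, v) \<in> E\<^sup>*)"
proof -
  obtain \<rho> where ch: "children E z = {\<rho>}" using card1 card_1_singletonE by blast
  have zr: "(z, \<rho>) \<in> E" using ch unfolding children_def by blast
  show ?thesis
  proof (intro exI conjI ballI impI)
    show "(z, \<rho>) \<in> E" by fact
  next
    fix v assume "v \<in> V" "v \<noteq> z"
    then obtain c where "(z, c) \<in> E" "(c, v) \<in> E\<^sup>*" using child_on_path reach by blast
    moreover have "c = \<rho>" using ch \<open>(z, c) \<in> E\<close> unfolding children_def by blast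
    ultimately show "(\<rho>, v) \<in> E\<^sup>*" by simp
  qed
qed

lemma lca_ne_z: "x \<in> V \<Longrightarrow> y \<in> V \<Longrightarrow> x \<noteq> z \<Longrightarrow> y \<noteq> z \<Longrightarrow> lca E x y \<noteq> z"
proof
  assume a: "x \<in> V" "y \<in> V" "x \<noteq> z" "y \<noteq> z" "lca E x y = z"
  obtain \<rho> where r: "(z, \<rho>) \<in> E" "\<forall>v\<in>V. v \<noteq> z \<longrightarrow> (\<rho>, v) \<in> E\<^sup>*" using root_child by blast
  then have "(\<rho>, z) \<in> E\<^sup>*" using lca_prop[OF a(1,2)] a by metis
  moreover have "(z, \<rho>) \<in> E\<^sup>*" "z \<noteq> \<rho>" using r(1) noloop by auto
  ultimately show False using anti by blast
qed

lemma leaf_min: "x \<in> leaves V E z \<Longrightarrow> (x, w) \<in> E\<^sup>* \<Longrightarrow> w = x"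
  unfolding leaves_def children_def by (auto elim: converse_rtranclE)

lemma lca_inner:
  assumes "x \<in> leaves V E z" "y \<in> leaves V E z" "x \<noteq> y"
  shows "lca E x y \<in> inner V E z"
proof -
  have V: "x \<in> V" "y \<in> V" "x \<noteq> z" "y \<noteq> z" using assms unfolding leaves_def by auto
  have L: "(lca E x y, x) \<in> E\<^sup>*" "(lca E x y, y) \<in> E\<^sup>*" using lca_prop V by auto
  have nz: "lca E x y \<noteq> z" using lca_ne_z V by blast
  have "lca E x y \<notin> leaves V E z"
  proof
    assume "lca E x y \<in> leaves V E z"
    then have "x = lca E x y" "y = lca E x y" using leaf_min L by auto
    then show False using assms by simp
  qed
  then show ?thesis using nz lca_V V unfolding inner_def by blast
qed

lemma kap_some: "(U, c) \<in> E \<Longrightarrow> (c, p) \<in> E\<^sup>* \<Longrightarrow> kap E U p = Some c"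
proof -
  assume a: "(U, c) \<in> E" "(c, p) \<in> E\<^sup>*"
  have "(THE c. (U, c) \<in> E \<and> (c, p) \<in> E\<^sup>*) = c"
    using a child_unique by blast
  then show ?thesis using a unfolding kap_def by auto
qed

lemma kap_SomeD: "kap E U p = Some c \<Longrightarrow> (U, c) \<in> E \<and> (c, p) \<in> E\<^sup>*"
proof -
  assume a: "kap E U p = Some c"
  then obtain c0 where c0: "(U, c0) \<in> E" "(c0, p) \<in> E\<^sup>*" unfolding kap_def by (auto split: if_splits)
  then have "kap E U p = Some c0" using kap_some by blast
  then show ?thesis using a c0 by simp
qed

lemma kap_below: "(U, p) \<in> E\<^sup>* \<Longrightarrow> p \<noteq> U \<Longrightarrow> kap E U p \<noteq> None"
  using child_on_path kap_some by blast

lemma kap_None: "kap E U p = None \<Longrightarrow> (U, p) \<in> E\<^sup>* \<Longrightarrow> p = U"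
  using kap_below by blast

lemma kap_Some_below: "kap E U p = Some c \<Longrightarrow> (U, p) \<in> E\<^sup>*"
  using kap_SomeD by (meson converse_rtrancl_into_rtrancl)

lemma lca_eq_kap:
  assumes "p \<in> V" "q \<in> V" "U \<in> V" "p \<noteq> U" "q \<noteq> U"
  shows "lca E p q = U \<longleftrightarrow> kap E U p \<noteq> None \<and> kap E U q \<noteq> None \<and> kap E U p \<noteq> kap E U q"
proof
  assume l: "lca E p q = U"
  have L: "(U, p) \<in> E\<^sup>*" "(U, q) \<in> E\<^sup>*" "\<forall>w. (w, p) \<in> E\<^sup>* \<and> (w, q) \<in> E\<^sup>* \<longrightarrow> (w, U) \<in> E\<^sup>*"
    using lca_prop[OF assms(1,2)] l by auto
  obtain c1 where c1: "(U, c1) \<in> E" "(c1, p) \<in> E\<^sup>*" using child_on_path L assms by blast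
  obtain c2 where c2: "(U, c2) \<in> E" "(c2, q) \<in> E\<^sup>*" using child_on_path L assms by blast
  have "c1 \<noteq> c2"
  proof
    assume "c1 = c2"
    then have "(c1, U) \<in> E\<^sup>*" using L c1 c2 by blast
    moreover have "(U, c1) \<in> E\<^sup>*" "U \<noteq> c1" using c1 noloop by auto
    ultimately show False using anti by blast
  qed
  then show "kap E U p \<noteq> None \<and> kap E U q \<noteq> None \<and> kap E U p \<noteq> kap E U q"
    using kap_some c1 c2 by auto
next
  assume k: "kap E U p \<noteq> None \<and> kap E U q \<noteq> None \<and> kap E U p \<noteq> kap E U q"
  then obtain c1 c2 where kc: "kap E U p = Some c1" "kap E U q = Some c2" "c1 \<noteq> c2" by auto
  have c1: "(U, c1) \<in> E" "(c1, p) \<in> E\<^sup>*" and c2: "(U, c2) \<in> E" "(c2, q) \<in> E\<^sup>*"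
    using kap_SomeD kc by auto
  have up: "(U, p) \<in> E\<^sup>*" "(U, q) \<in> E\<^sup>*" using c1 c2 by (meson converse_rtrancl_into_rtrancl)+
  define l where "l = lca E p q"
  have L: "(l, p) \<in> E\<^sup>*" "(l, q) \<in> E\<^sup>*" "(U, l) \<in> E\<^sup>*"
    using lca_prop[OF assms(1,2)] up l_def by auto
  show "lca E p q = U"
  proof (rule ccontr)
    assume "lca E p q \<noteq> U"
    then obtain c where c: "(U, c) \<in> E" "(c, l) \<in> E\<^sup>*" using child_on_path L l_def by metis
    have "c = c1" using child_unique[OF c(1) c1(1)] c(2) L(1) c1(2) by (meson rtrancl_trans)
    moreover have "c = c2" using child_unique[OF c(1) c2(1)] c(2) L(2) c2(2) by (meson rtrancl_trans)
    ultimately show False using kc by simp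
  qed
qed

lemma kap_eq_time:
  assumes "p \<in> V" "q \<in> V" "U \<in> V" "p \<noteq> U" "q \<noteq> U" "\<tau> (lca E p q) < \<tau> U"
  shows "kap E U p = kap E U q"
proof (rule ccontr)
  assume ne: "kap E U p \<noteq> kap E U q"
  define W where "W = lca E p q"
  have L: "(W, p) \<in> E\<^sup>*" "(W, q) \<in> E\<^sup>*" "\<forall>w. (w, p) \<in> E\<^sup>* \<and> (w, q) \<in> E\<^sup>* \<longrightarrow> (w, W) \<in> E\<^sup>*"
    using lca_prop[OF assms(1,2)] W_def by auto
  have tw: "\<tau> W < \<tau> U" using assms W_def by simp
  show False
  proof (cases "kap E U p \<noteq> None \<and> kap E U q \<noteq> None")
    case True
    then have "W = U" using lca_eq_kap assms ne W_def by blast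
    then show False using tw by simp
  next
    case False
    have gen: False if "kap E U p' = Some c" "kap E U q' = None" "(W, p') \<in> E\<^sup>*" "(W, q') \<in> E\<^sup>*" "q' \<noteq> U" for p' q' c
    proof -
      have "(U, p') \<in> E\<^sup>*" using kap_Some_below that by blast
      then have "(U, W) \<in> E\<^sup>* \<or> (W, U) \<in> E\<^sup>*" using chain that(3) by blast
      then show False
      proof
        assume "(U, W) \<in> E\<^sup>*"
        then have "(U, q') \<in> E\<^sup>*" using that(4) by (meson rtrancl_trans)
        then show False using kap_None that by blast
      next
        assume wu: "(W, U) \<in> E\<^sup>*"
        show False
        proof (cases "W = U")
          case True
          then show False using tw by simp
        next
          case False
          then show False using tlt wu tw by fastforce
        qed
      qed
    qed
    from False ne show False
      using gen[of p _ q] gen[of q _ p] L assms by (cases "kap E U p"; cases "kap E U q") auto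
  qed
qed

lemma preceq_ve_trans:
  assumes "X \<in> elems V E" "Y \<in> elems V E" "Z \<in> elems V E"
    "preceq_ve E X Y" "preceq_ve E Y Z"
  shows "preceq_ve E X Z"
proof -
  have ed: "\<And>u w. Ed u w \<in> elems V E \<Longrightarrow> (u, w) \<in> E" unfolding elems_def by auto
  show ?thesis
    using assms
    apply (cases X; cases Y; cases Z)
    apply (simp_all add: preceq_def)
      apply (metis ed rtrancl_trans r_into_rtrancl)
     apply (metis ed rtrancl_trans r_into_rtrancl)
    apply (metis ed rtrancl_trans r_into_rtrancl strict_parent pu)
    done
qed

lemma preceq_ve_refl: "preceq_ve E X X"
  by (cases X) (auto simp: preceq_def)

end

locale scen =
  fixes VT :: "'v set" and ET :: "('v \<times> 'v) set" and zT :: 'v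
    and VS :: "'s set" and ES :: "('s \<times> 's) set" and zS :: 's
    and \<sigma> :: "'v \<Rightarrow> 's" and \<mu> :: "'v \<Rightarrow> 's vedge"
    and \<tau>T :: "'v \<Rightarrow> real" and \<tau>S :: "'s \<Rightarrow> real"
  assumes rs: "relaxed_scenario VT ET zT VS ES zS \<sigma> \<mu> \<tau>T \<tau>S"
begin

lemma phT: "phylo_tree VT ET zT" and phS: "phylo_tree VS ES zS"
  and tmT: "time_map VT ET \<tau>T" and tmS: "time_map VS ES \<tau>S"
  and sig: "\<sigma> ` leaves VT ET zT \<subseteq> leaves VS ES zS"
  and mue: "\<forall>x\<in>VT. \<mu> x \<in> elems VS ES"
  and mu0: "\<forall>x\<in>VT. \<mu> x = Vx zS \<longleftrightarrow> x = zT"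
  and mul: "\<forall>x\<in>VT. (\<exists>l\<in>leaves VS ES zS. \<mu> x = Vx l) \<longleftrightarrow> x \<in> leaves VT ET zT"
  and mus: "\<forall>x\<in>leaves VT ET zT. \<mu> x = Vx (\<sigma> x)"
  and S2: "\<forall>x\<in>VT. \<forall>u. \<mu> x = Vx u \<longrightarrow> \<tau>S u = \<tau>T x"
  and S3: "\<forall>x\<in>VT. \<forall>u v. \<mu> x = Ed u v \<longrightarrow> \<tau>S v < \<tau>T x \<and> \<tau>T x < \<tau>S u"
  using rs unfolding relaxed_scenario_def by auto

sublocale T: tt VT ET zT \<tau>T
  using phT tmT by unfold_locales (auto simp: phylo_tree_def)
sublocale S: tt VS ES zS \<tau>S
  using phS tmS by unfold_locales (auto simp: phylo_tree_def)

lemma leafT: "x \<in> leaves VT ET zT \<Longrightarrow> x \<in> VT \<and> x \<noteq> zT"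
  unfolding leaves_def by auto
lemma leafS: "x \<in> leaves VS ES zS \<Longrightarrow> x \<in> VS \<and> x \<noteq> zS"
  unfolding leaves_def by auto
lemma sigL: "x \<in> leaves VT ET zT \<Longrightarrow> \<sigma> x \<in> leaves VS ES zS"
  using sig by blast
lemma edS: "Ed u w \<in> elems VS ES \<Longrightarrow> (u, w) \<in> ES" unfolding elems_def by auto
lemma vxS: "Vx u \<in> elems VS ES \<Longrightarrow> u \<in> VS" unfolding elems_def by auto

lemma key:
  assumes gen: "generic VT ET zT VS ES zS \<mu> \<tau>T \<tau>S"
    and x: "x \<in> leaves VT ET zT" and y: "y \<in> leaves VT ET zT" and ne: "x \<noteq> y"
  shows "(\<tau>T (lca ET x y) = \<tau>S (lca ES (\<sigma> x) (\<sigma> y)) \<longleftrightarrow> \<mu> (lca ET x y) = Vx (lca ES (\<sigma> x) (\<sigma> y)))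
    \<and> (\<tau>T (lca ET x y) = \<tau>S (lca ES (\<sigma> x) (\<sigma> y)) \<longrightarrow> lca ES (\<sigma> x) (\<sigma> y) \<in> inner VS ES zS)"
proof -
  define v where "v = lca ET x y"
  have vi: "v \<in> inner VT ET zT" using T.lca_inner x y ne v_def by blast
  have vV: "v \<in> VT" using vi unfolding inner_def by auto
  have sx: "\<sigma> x \<in> leaves VS ES zS" "\<sigma> y \<in> leaves VS ES zS" using sigL x y by auto
  have xV: "x \<in> VT" "y \<in> VT" using leafT x y by auto
  have bk: "\<mu> v = Vx (lca ES (\<sigma> x) (\<sigma> y)) \<Longrightarrow> \<tau>T v = \<tau>S (lca ES (\<sigma> x) (\<sigma> y))"
    using S2 vV by metis
  show ?thesis
  proof (cases "\<sigma> x = \<sigma> y")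
    case True
    have l: "lca ES (\<sigma> x) (\<sigma> y) = \<sigma> x" using True S.lca_self leafS sx by auto
    have t1: "\<tau>S (\<sigma> x) = \<tau>T x" using S2 mus x xV by metis
    have "(v, x) \<in> ET\<^sup>*" using T.lca_prop xV v_def by blast
    moreover have "v \<noteq> x" using vi x unfolding inner_def by auto
    ultimately have "\<tau>T x < \<tau>T v" using T.tlt by blast
    then have "\<tau>T v \<noteq> \<tau>S (lca ES (\<sigma> x) (\<sigma> y))" using l t1 by simp
    then show ?thesis using bk v_def by blast
  next
    case False
    have Ui: "lca ES (\<sigma> x) (\<sigma> y) \<in> inner VS ES zS" using S.lca_inner sx False by blast
    have "\<tau>T v = \<tau>S (lca ES (\<sigma> x) (\<sigma> y)) \<Longrightarrow> \<mu> v = Vx (lca ES (\<sigma> x) (\<sigma> y))"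
      using vi Ui gen unfolding generic_def by blast
    then show ?thesis using bk v_def Ui by blast
  qed
qed
lemma mono_edge:
  assumes e: "(p, q) \<in> ET" and nh: "\<not> HGT_edge ET ES \<mu> p q"
  shows "preceq_ve ES (\<mu> q) (\<mu> p)"
proof -
  have pq: "p \<in> VT" "q \<in> VT" using T.edgeV e by auto
  have tq: "\<tau>T q < \<tau>T p" using T.tlt e T.noloop by blast
  have cmp: "preceq_ve ES (\<mu> p) (\<mu> q) \<or> preceq_ve ES (\<mu> q) (\<mu> p)"
    using nh e unfolding HGT_edge_def comparable_ve_def by blast
  have el: "\<mu> p \<in> elems VS ES" "\<mu> q \<in> elems VS ES" using mue pq by auto
  show ?thesis
  proof (cases "preceq_ve ES (\<mu> q) (\<mu> p)")
    case True then show ?thesis .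
  next
    case False
    then have pq': "preceq_ve ES (\<mu> p) (\<mu> q)" using cmp by blast
    show ?thesis
    proof (cases "\<mu> p")
      case (Vx a)
      note pa = Vx
      have ta: "\<tau>S a = \<tau>T p" using S2 pq pa by metis
      show ?thesis
      proof (cases "\<mu> q")
        case (Vx b)
        have tb: "\<tau>S b = \<tau>T q" using S2 pq Vx by metis
        have "(b, a) \<in> ES\<^sup>*" using pq' pa Vx by (simp add: preceq_def)
        then have "a = b" using S.tlt ta tb tq by force
        then show ?thesis using pa Vx by (simp add: preceq_def)
      next
        case (Ed u w)
        have "\<tau>S w < \<tau>T q" using S3 pq Ed by metis
        moreover have "(w, a) \<in> ES\<^sup>*" using pq' pa Ed by (simp add: preceq_def)
        then have "\<tau>S a \<le> \<tau>S w" using S.tle by blast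
        ultimately show ?thesis using ta tq by linarith
      qed
    next
      case (Ed u w)
      note pe = Ed
      have tp: "\<tau>T p < \<tau>S u" using S3 pq pe by metis
      have uw: "(u, w) \<in> ES" using edS el pe by metis
      show ?thesis
      proof (cases "\<mu> q")
        case (Vx a)
        have ta: "\<tau>S a = \<tau>T q" using S2 pq Vx by metis
        have "(a, u) \<in> ES\<^sup>*" using pq' pe Vx by (simp add: preceq_def)
        then have "\<tau>S u \<le> \<tau>S a" using S.tle by blast
        then show ?thesis using ta tq tp by linarith
      next
        case (Ed u' w')
        have tq': "\<tau>S w' < \<tau>T q" using S3 pq Ed by metis
        have ww: "(w', w) \<in> ES\<^sup>*" using pq' pe Ed by (simp add: preceq_def)
        show ?thesis
        proof (cases "w = w'")
          case True
          then show ?thesis using pe Ed by (simp add: preceq_def)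
        next
          case False
          then have "(w', u) \<in> ES\<^sup>*" using S.strict_parent ww uw by metis
          then have "\<tau>S u \<le> \<tau>S w'" using S.tle by blast
          then show ?thesis using tq' tq tp by linarith
        qed
      qed
    qed
  qed
qed

lemma mono:
  assumes nh: "\<not> (\<exists>u v. HGT_edge ET ES \<mu> u v)" and r: "(w, u) \<in> ET\<^sup>*" and wV: "w \<in> VT"
  shows "preceq_ve ES (\<mu> u) (\<mu> w)"
  using r
proof (induction rule: rtrancl_induct)
  case base
  then show ?case by (rule S.preceq_ve_refl)
next
  case (step y z)
  have yz: "y \<in> VT" "z \<in> VT" using T.edgeV step(2) by auto
  have "preceq_ve ES (\<mu> z) (\<mu> y)" using mono_edge step(2) nh by blast
  then show ?case using S.preceq_ve_trans[of "\<mu> z" "\<mu> y" "\<mu> w"] step mue yz wV by blast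
qed

lemma cog:
  assumes hyp: "(\<not> (\<exists>u v. HGT_edge ET ES \<mu> u v)) \<or> (binary_tree VS ES zS \<and> binary_tree VT ET zT)"
  shows "cograph (sQO VT ET zT ES \<sigma> \<mu>)"
proof -
  let ?L = "leaves VT ET zT"
  define G where "G = snd (sQO VT ET zT ES \<sigma> \<mu>)"
  have Gd: "\<And>x y. (x, y) \<in> G \<longleftrightarrow> x \<in> ?L \<and> y \<in> ?L \<and> x \<noteq> y \<and> \<mu> (lca ET x y) = Vx (lca ES (\<sigma> x) (\<sigma> y))"
    unfolding G_def sQO_def by simp
  have fstG: "fst (sQO VT ET zT ES \<sigma> \<mu>) = ?L" by (simp add: sQO_def)
  show ?thesis
    unfolding cograph_def fstG G_def[symmetric]
  proof (rule notI, elim bexE conjE)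
    fix a b c d
    assume abcd: "a \<in> ?L" "b \<in> ?L" "c \<in> ?L" "d \<in> ?L" and dist: "distinct [a, b, c, d]"
      and e: "(a, b) \<in> G" "(b, c) \<in> G" "(c, d) \<in> G" "(a, c) \<notin> G" "(b, d) \<notin> G" "(a, d) \<notin> G"
    define A where "A = {a, b, c, d}"
    have AL: "A \<subseteq> ?L" using abcd A_def by auto
    have AV: "A \<subseteq> VT" using AL leafT by blast
    obtain v where vc: "\<forall>x\<in>A. (v, x) \<in> ET\<^sup>*" and vm: "\<forall>w. (\<forall>x\<in>A. (w, x) \<in> ET\<^sup>*) \<longrightarrow> (w, v) \<in> ET\<^sup>*"
      using T.common_min[OF AV] A_def by blast
    have vV: "v \<in> VT" using vc T.rt_V1 AV A_def by blast
    have vnx: "v \<noteq> x" if "x \<in> A" for x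
    proof
      assume vx: "v = x"
      have xl: "x \<in> ?L" using that AL by blast
      have "a = x" "b = x" using T.leaf_min[OF xl] vc vx A_def by auto
      then show False using dist by simp
    qed
    have vnl: "v \<notin> ?L"
    proof
      assume "v \<in> ?L"
      then have "a = v" using T.leaf_min vc A_def by blast
      then show False using vnx A_def by blast
    qed
    have vnz: "v \<noteq> zT"
    proof
      assume vz: "v = zT"
      obtain \<rho> where r: "(zT, \<rho>) \<in> ET" "\<forall>w\<in>VT. w \<noteq> zT \<longrightarrow> (\<rho>, w) \<in> ET\<^sup>*" using T.root_child by blast
      have "\<forall>x\<in>A. (\<rho>, x) \<in> ET\<^sup>*" using r AL leafT by blast
      then have "(\<rho>, zT) \<in> ET\<^sup>*" using vm vz by blast
      moreover have "(zT, \<rho>) \<in> ET\<^sup>*" "zT \<noteq> \<rho>" using r T.noloop by auto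
      ultimately show False using T.anti by blast
    qed
    have vi: "v \<in> inner VT ET zT" unfolding inner_def using vV vnl vnz by auto
    define \<beta> where "\<beta> x = (THE c. (v, c) \<in> ET \<and> (c, x) \<in> ET\<^sup>*)" for x
    have bx: "(v, \<beta> x) \<in> ET \<and> (\<beta> x, x) \<in> ET\<^sup>*" if xA: "x \<in> A" for x
    proof -
      obtain c where c: "(v, c) \<in> ET" "(c, x) \<in> ET\<^sup>*" using T.child_on_path vc vnx xA by blast
      have "\<beta> x = c" unfolding \<beta>_def
      proof (rule the_equality)
        show "(v, c) \<in> ET \<and> (c, x) \<in> ET\<^sup>*" using c by blast
      next
        fix c1 assume "(v, c1) \<in> ET \<and> (c1, x) \<in> ET\<^sup>*"
        then show "c1 = c" using T.child_unique c by blast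
      qed
      then show ?thesis using c by simp
    qed
    have cross_lca: "lca ET x y = v" if "x \<in> A" "y \<in> A" "\<beta> x \<noteq> \<beta> y" for x y
    proof (rule ccontr)
      assume ne: "lca ET x y \<noteq> v"
      have xy: "x \<in> VT" "y \<in> VT" using that AV by auto
      have L: "(lca ET x y, x) \<in> ET\<^sup>*" "(lca ET x y, y) \<in> ET\<^sup>*" "(v, lca ET x y) \<in> ET\<^sup>*"
        using T.lca_prop[OF xy] vc that by auto
      obtain c0 where c0: "(v, c0) \<in> ET" "(c0, lca ET x y) \<in> ET\<^sup>*" using T.child_on_path L(3) ne by metis
      have "c0 = \<beta> x" using T.child_unique[OF c0(1)] bx[OF that(1)] c0(2) L(1) by (meson rtrancl_trans)
      moreover have "c0 = \<beta> y" using T.child_unique[OF c0(1)] bx[OF that(2)] c0(2) L(2) by (meson rtrancl_trans)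
      ultimately show False using that by simp
    qed
    have within_lt: "\<tau>T (lca ET x y) < \<tau>T v" if "x \<in> A" "y \<in> A" "\<beta> x = \<beta> y" for x y
    proof -
      have xy: "x \<in> VT" "y \<in> VT" using that AV by auto
      have "(\<beta> x, lca ET x y) \<in> ET\<^sup>*" using T.lca_prop[OF xy] bx that by metis
      then have "\<tau>T (lca ET x y) \<le> \<tau>T (\<beta> x)" using T.tle by blast
      moreover have "\<tau>T (\<beta> x) < \<tau>T v" using T.tlt bx[OF that(1)] T.noloop by blast
      ultimately show ?thesis by linarith
    qed
    have notall: "\<not> (\<beta> a = \<beta> b \<and> \<beta> a = \<beta> c \<and> \<beta> a = \<beta> d)"
    proof
      assume h: "\<beta> a = \<beta> b \<and> \<beta> a = \<beta> c \<and> \<beta> a = \<beta> d"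
      have "\<forall>x\<in>A. (\<beta> a, x) \<in> ET\<^sup>*" using bx[of a] bx[of b] bx[of c] bx[of d] h A_def by auto
      then have "(\<beta> a, v) \<in> ET\<^sup>*" using vm by blast
      moreover have "(v, \<beta> a) \<in> ET\<^sup>*" "v \<noteq> \<beta> a" using bx[of a] A_def T.noloop by auto
      ultimately show False using T.anti by blast
    qed
    show False
    proof (cases "\<exists>U. \<mu> v = Vx U")
      case False
      have sb: "\<beta> x = \<beta> y" if "x \<in> A" "y \<in> A" "(x, y) \<in> G" for x y
        using cross_lca[OF that(1,2)] Gd[of x y] that(3) False by metis
      have "\<beta> a = \<beta> b" "\<beta> b = \<beta> c" "\<beta> c = \<beta> d" using sb e(1-3) A_def by auto
      then show False using notall by simp
    next
      case True
      then obtain U where U: "\<mu> v = Vx U" by blast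
      have UV: "U \<in> VS" using mue vV U vxS by metis
      have UnL: "U \<notin> leaves VS ES zS" using mul vV vnl U by blast
      have Unz: "U \<noteq> zS" using mu0 vV vnz U by metis
      have Ui: "U \<in> inner VS ES zS" unfolding inner_def using UV UnL Unz by auto
      have tU: "\<tau>S U = \<tau>T v" using S2 vV U by metis
      have sV: "\<sigma> x \<in> VS \<and> \<sigma> x \<noteq> U" if "x \<in> A" for x
        using sigL leafS AL UnL that by blast
      have crossG: "((x, y) \<in> G \<longleftrightarrow> kap ES U (\<sigma> x) \<noteq> None \<and> kap ES U (\<sigma> y) \<noteq> None \<and> kap ES U (\<sigma> x) \<noteq> kap ES U (\<sigma> y))"
        if "x \<in> A" "y \<in> A" "\<beta> x \<noteq> \<beta> y" for x y
      proof -
        have "x \<noteq> y" using that by blast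
        then have "(x, y) \<in> G \<longleftrightarrow> lca ES (\<sigma> x) (\<sigma> y) = U"
          using Gd[of x y] cross_lca[OF that] U AL that by auto
        also have "\<dots> \<longleftrightarrow> kap ES U (\<sigma> x) \<noteq> None \<and> kap ES U (\<sigma> y) \<noteq> None \<and> kap ES U (\<sigma> x) \<noteq> kap ES U (\<sigma> y)"
          using S.lca_eq_kap sV[OF that(1)] sV[OF that(2)] UV by blast
        finally show ?thesis .
      qed
      from hyp show False
      proof
        assume nh: "\<not> (\<exists>u v. HGT_edge ET ES \<mu> u v)"
        have ch: "\<exists>c'. (U, c') \<in> ES \<and> (\<forall>y\<in>?L. (c0, y) \<in> ET\<^sup>* \<longrightarrow> (c', \<sigma> y) \<in> ES\<^sup>*)"
          if c0: "(v, c0) \<in> ET" for c0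
        proof -
          have c0V: "c0 \<in> VT" using T.edgeV c0 by blast
          have m1: "preceq_ve ES (\<mu> c0) (Vx U)" using mono[OF nh _ vV, of c0] c0 U by auto
          have tc: "\<tau>T c0 < \<tau>T v" using T.tlt c0 T.noloop by blast
          have m2: "preceq_ve ES (Vx (\<sigma> y)) (\<mu> c0)" if "y \<in> ?L" "(c0, y) \<in> ET\<^sup>*" for y
            using mono[OF nh that(2) c0V] mus that(1) by metis
          show ?thesis
          proof (cases "\<mu> c0")
            case (Vx W)
            have UW: "(U, W) \<in> ES\<^sup>*" using m1 Vx by (simp add: preceq_def)
            have "W \<noteq> U" using S2 c0V Vx tU tc by force
            then obtain c' where c': "(U, c') \<in> ES" "(c', W) \<in> ES\<^sup>*" using S.child_on_path UW by metis
            have "(W, \<sigma> y) \<in> ES\<^sup>*" if "y \<in> ?L" "(c0, y) \<in> ET\<^sup>*" for y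
              using m2[OF that] Vx by (simp add: preceq_def)
            then show ?thesis using c' by (meson rtrancl_trans)
          next
            case (Ed p0 q0)
            have pq0: "(p0, q0) \<in> ES" using edS mue c0V Ed by metis
            have Up: "(U, p0) \<in> ES\<^sup>*" using m1 Ed by (simp add: preceq_def)
            then have Uq: "(U, q0) \<in> ES\<^sup>*" using pq0 by (meson rtrancl_into_rtrancl)
            have "U \<noteq> q0"
            proof
              assume "U = q0"
              then have "(p0, U) \<in> ES\<^sup>*" using pq0 by auto
              then have "p0 = U" using S.anti Up by blast
              then show False using pq0 \<open>U = q0\<close> S.noloop by auto
            qed
            then obtain c' where c': "(U, c') \<in> ES" "(c', q0) \<in> ES\<^sup>*" using S.child_on_path Uq by metis
            have "(q0, \<sigma> y) \<in> ES\<^sup>*" if "y \<in> ?L" "(c0, y) \<in> ET\<^sup>*" for y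
              using m2[OF that] Ed by (simp add: preceq_def)
            then show ?thesis using c' by (meson rtrancl_trans)
          qed
        qed
        have ks: "kap ES U (\<sigma> x) = Some c' \<and> kap ES U (\<sigma> y) = Some c'"
          if "x \<in> A" "y \<in> A" "\<beta> x = \<beta> y" "(U, c') \<in> ES" "\<forall>y\<in>?L. (\<beta> x, y) \<in> ET\<^sup>* \<longrightarrow> (c', \<sigma> y) \<in> ES\<^sup>*" for x y c'
        proof -
          have xl: "x \<in> ?L" "y \<in> ?L" using that(1,2) AL by auto
          have "(\<beta> x, x) \<in> ET\<^sup>*" "(\<beta> x, y) \<in> ET\<^sup>*" using bx[OF that(1)] bx[OF that(2)] that(3) by auto
          then have "(c', \<sigma> x) \<in> ES\<^sup>*" "(c', \<sigma> y) \<in> ES\<^sup>*" using that(5) xl by auto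
          then show ?thesis using S.kap_some that(4) by blast
        qed
        have kx: "kap ES U (\<sigma> x) \<noteq> None" if xA: "x \<in> A" for x
        proof -
          obtain c' where "(U, c') \<in> ES" "\<forall>y\<in>?L. (\<beta> x, y) \<in> ET\<^sup>* \<longrightarrow> (c', \<sigma> y) \<in> ES\<^sup>*"
            using ch[OF conjunct1[OF bx[OF xA]]] by blast
          then have "kap ES U (\<sigma> x) = Some c'" using ks[OF xA xA refl] by blast
          then show ?thesis by simp
        qed
        have kw: "kap ES U (\<sigma> x) = kap ES U (\<sigma> y)" if xy: "x \<in> A" "y \<in> A" "\<beta> x = \<beta> y" for x y
        proof -
          obtain c' where "(U, c') \<in> ES" "\<forall>y\<in>?L. (\<beta> x, y) \<in> ET\<^sup>* \<longrightarrow> (c', \<sigma> y) \<in> ES\<^sup>*"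
            using ch[OF conjunct1[OF bx[OF xy(1)]]] by blast
          then show ?thesis using ks[OF xy] by simp
        qed
        show False
        proof (rule comb_nohgt[of \<beta> a b c d G "\<lambda>x. kap ES U (\<sigma> x)"])
          show "\<not> (\<beta> a = \<beta> b \<and> \<beta> a = \<beta> c \<and> \<beta> a = \<beta> d)" by (rule notall)
        next
          fix x y assume h: "x \<in> {a, b, c, d}" "y \<in> {a, b, c, d}" "\<beta> x \<noteq> \<beta> y"
          have xA: "x \<in> A" "y \<in> A" using h(1,2) A_def by blast+
          show "(x, y) \<in> G \<longleftrightarrow> kap ES U (\<sigma> x) \<noteq> kap ES U (\<sigma> y)"
            using crossG[OF xA h(3)] kx[OF xA(1)] kx[OF xA(2)] by blast
        next
          fix x y assume h: "x \<in> {a, b, c, d}" "y \<in> {a, b, c, d}" "\<beta> x = \<beta> y"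
          have xA: "x \<in> A" "y \<in> A" using h(1,2) A_def by blast+
          show "kap ES U (\<sigma> x) = kap ES U (\<sigma> y)" using kw[OF xA h(3)] .
        qed (fact e)+
      next
        assume bin: "binary_tree VS ES zS \<and> binary_tree VT ET zT"
        have "card (children ET v) = 2" using bin vi unfolding binary_tree_def by blast
        then obtain p q where pq: "children ET v = {p, q}" by (meson card_2_iff)
        have "card (children ES U) = 2" using bin Ui unfolding binary_tree_def by blast
        then obtain l r where lr: "children ES U = {l, r}" by (meson card_2_iff)
        have bpq: "\<beta> x = p \<or> \<beta> x = q" if "x \<in> A" for x
          using bx[OF that] pq unfolding children_def by blast
        have klr: "kap ES U (\<sigma> x) = None \<or> kap ES U (\<sigma> x) = Some l \<or> kap ES U (\<sigma> x) = Some r" if "x \<in> A" for x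
        proof (cases "kap ES U (\<sigma> x)")
          case None then show ?thesis by simp
        next
          case (Some c')
          then have "(U, c') \<in> ES" using S.kap_SomeD by blast
          then have "c' \<in> {l, r}" using lr unfolding children_def by blast
          then show ?thesis using Some by auto
        qed
        have wi: "kap ES U (\<sigma> x) = kap ES U (\<sigma> y)" if "x \<in> A" "y \<in> A" "\<beta> x = \<beta> y" "(x, y) \<in> G" for x y
        proof -
          have xy: "x \<in> VT" "y \<in> VT" using that AV by auto
          have wV: "lca ET x y \<in> VT" using T.lca_V xy by blast
          have "\<mu> (lca ET x y) = Vx (lca ES (\<sigma> x) (\<sigma> y))" using Gd that(4) by blast
          then have "\<tau>S (lca ES (\<sigma> x) (\<sigma> y)) = \<tau>T (lca ET x y)" using S2 wV by metis
          then have "\<tau>S (lca ES (\<sigma> x) (\<sigma> y)) < \<tau>S U" using within_lt[OF that(1-3)] tU by linarith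
          then show ?thesis using S.kap_eq_time sV[OF that(1)] sV[OF that(2)] UV by blast
        qed
        show False
        proof (rule comb_bin[of a b c d \<beta> p q "\<lambda>x. kap ES U (\<sigma> x)" l r G])
          show "\<not> (\<beta> a = \<beta> b \<and> \<beta> a = \<beta> c \<and> \<beta> a = \<beta> d)" by (rule notall)
        next
          fix x assume "x \<in> {a, b, c, d}"
          then have xA: "x \<in> A" using A_def by blast
          show "\<beta> x = p \<or> \<beta> x = q" using bpq[OF xA] .
        next
          fix x assume "x \<in> {a, b, c, d}"
          then have xA: "x \<in> A" using A_def by blast
          show "kap ES U (\<sigma> x) = None \<or> kap ES U (\<sigma> x) = Some l \<or> kap ES U (\<sigma> x) = Some r"
            using klr[OF xA] .
        next
          fix x y assume h: "x \<in> {a, b, c, d}" "y \<in> {a, b, c, d}" "\<beta> x \<noteq> \<beta> y"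
          have xA: "x \<in> A" "y \<in> A" using h(1,2) A_def by blast+
          show "(x, y) \<in> G \<longleftrightarrow> kap ES U (\<sigma> x) \<noteq> None \<and> kap ES U (\<sigma> y) \<noteq> None \<and> kap ES U (\<sigma> x) \<noteq> kap ES U (\<sigma> y)"
            using crossG[OF xA h(3)] .
        next
          fix x y assume h: "x \<in> {a, b, c, d}" "y \<in> {a, b, c, d}" "\<beta> x = \<beta> y" "(x, y) \<in> G"
          have xA: "x \<in> A" "y \<in> A" using h(1,2) A_def by blast+
          show "kap ES U (\<sigma> x) = kap ES U (\<sigma> y)" using wi[OF xA h(3,4)] .
        qed (fact e)+
      qed
    qed
  qed
qed

end

theorem theorem8:
  fixes VT :: "'v set" and ET :: "('v \<times> 'v) set" and zT :: 'v
    and VS :: "'s set" and ES :: "('s \<times> 's) set" and zS :: 's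
    and \<sigma> :: "'v \<Rightarrow> 's" and \<mu> :: "'v \<Rightarrow> 's vedge"
    and \<tau>T :: "'v \<Rightarrow> real" and \<tau>S :: "'s \<Rightarrow> real"
  assumes scen: "relaxed_scenario VT ET zT VS ES zS \<sigma> \<mu> \<tau>T \<tau>S"
    and gen: "generic VT ET zT VS ES zS \<mu> \<tau>T \<tau>S"
  shows "EDT_graph VT ET zT ES \<sigma> \<tau>T \<tau>S = sQO VT ET zT ES \<sigma> \<mu>
    \<and> subgraph (EDT_graph VT ET zT ES \<sigma> \<tau>T \<tau>S) (wQO VT ET zT VS ES zS \<mu>)
    \<and> ((\<not> (\<exists>u v. HGT_edge ET ES \<mu> u v)) \<or> (binary_tree VS ES zS \<and> binary_tree VT ET zT)
         \<longrightarrow> cograph (sQO VT ET zT ES \<sigma> \<mu>))"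
proof -
  interpret sc: scen VT ET zT VS ES zS \<sigma> \<mu> \<tau>T \<tau>S
    by unfold_locales (rule scen)
  let ?L = "leaves VT ET zT"
  have E1: "\<And>x y. x \<in> ?L \<Longrightarrow> y \<in> ?L \<Longrightarrow> x \<noteq> y \<Longrightarrow>
      (\<tau>T (lca ET x y) = \<tau>S (lca ES (\<sigma> x) (\<sigma> y)) \<longleftrightarrow> \<mu> (lca ET x y) = Vx (lca ES (\<sigma> x) (\<sigma> y)))"
    using sc.key[OF gen] by blast
  have E2: "\<And>x y. x \<in> ?L \<Longrightarrow> y \<in> ?L \<Longrightarrow> x \<noteq> y \<Longrightarrow>
      \<tau>T (lca ET x y) = \<tau>S (lca ES (\<sigma> x) (\<sigma> y)) \<Longrightarrow> \<mu> (lca ET x y) \<in> Vx ` inner VS ES zS"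
    using sc.key[OF gen] by blast
  have p1: "EDT_graph VT ET zT ES \<sigma> \<tau>T \<tau>S = sQO VT ET zT ES \<sigma> \<mu>"
    unfolding EDT_graph_def sQO_def using E1 by auto
  have p2: "subgraph (EDT_graph VT ET zT ES \<sigma> \<tau>T \<tau>S) (wQO VT ET zT VS ES zS \<mu>)"
    unfolding subgraph_def EDT_graph_def wQO_def using E2 by auto
  show ?thesis using p1 p2 sc.cog by blast
qed

end
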